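(* Let $G$ be a graph of order $n$ with minimum degree $\delta\geq 1$, let $\mu=\mu(G)$, and let $(x_1,\ldots,x_n)$ be a nonnegative unit eigenvector of the adjacency matrix of $G$ for the eigenvalue $\mu$. If $u$ is a vertex with $x_u=\min\{x_1,\ldots,x_n\}$, then \[ \mu(G-u)\geq\mu\left(1-\frac{1}{\mu^2/\delta+n-\delta-1}\right). \]
   Context: All graphs are finite and simple; $\mu(G)$ denotes the largest eigenvalue of the adjacency matrix of $G$; $G-u$ is the graph obtained by deleting vertex $u$; the eigenvector is indexed by the vertices of $G$. *)

theory Defs
  imports Complex_Main
begin

text \<open>A finite simple graph is given by a finite vertex set V and a symmetric,
  irreflexive adjacency relation E (only its restriction to V matters).\<close>

definition simple_graph :: "'a set \<Rightarrow> ('a \<Rightarrow> 'a \<Rightarrow> bool) \<Rightarrow> bool" where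
  "simple_graph V E \<longleftrightarrow> finite V \<and> V \<noteq> {} \<and>
     (\<forall>v\<in>V. \<forall>w\<in>V. E v w \<longleftrightarrow> E w v) \<and> (\<forall>v\<in>V. \<not> E v v)"

definition degree :: "'a set \<Rightarrow> ('a \<Rightarrow> 'a \<Rightarrow> bool) \<Rightarrow> 'a \<Rightarrow> nat" where
  "degree V E v = card {w \<in> V. E v w}"

definition min_degree :: "'a set \<Rightarrow> ('a \<Rightarrow> 'a \<Rightarrow> bool) \<Rightarrow> nat" where
  "min_degree V E = Min (degree V E ` V)"

definition adj_mult :: "'a set \<Rightarrow> ('a \<Rightarrow> 'a \<Rightarrow> bool) \<Rightarrow> ('a \<Rightarrow> real) \<Rightarrow> 'a \<Rightarrow> real" where
  "adj_mult V E x v = (\<Sum>w\<in>V. (if E v w then 1 else 0) * x w)"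

definition is_eigenvector :: "'a set \<Rightarrow> ('a \<Rightarrow> 'a \<Rightarrow> bool) \<Rightarrow> real \<Rightarrow> ('a \<Rightarrow> real) \<Rightarrow> bool" where
  "is_eigenvector V E lam x \<longleftrightarrow> (\<exists>v\<in>V. x v \<noteq> 0) \<and> (\<forall>v\<in>V. adj_mult V E x v = lam * x v)"

definition is_eigenvalue :: "'a set \<Rightarrow> ('a \<Rightarrow> 'a \<Rightarrow> bool) \<Rightarrow> real \<Rightarrow> bool" where
  "is_eigenvalue V E lam \<longleftrightarrow> (\<exists>x. is_eigenvector V E lam x)"

text \<open>Largest eigenvalue of the (real symmetric) adjacency matrix; all its
  eigenvalues are real.\<close>
definition spec_radius :: "'a set \<Rightarrow> ('a \<Rightarrow> 'a \<Rightarrow> bool) \<Rightarrow> real" where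
  "spec_radius V E = Max {lam. is_eigenvalue V E lam}"

end

theory Submission imports Defs "HOL-Analysis.Analysis" begin

definition ip :: "'a set \<Rightarrow> ('a \<Rightarrow> real) \<Rightarrow> ('a \<Rightarrow> real) \<Rightarrow> real" where
  "ip W f g = (\<Sum>w\<in>W. f w * g w)"

definition qf :: "'a set \<Rightarrow> ('a \<Rightarrow> 'a \<Rightarrow> bool) \<Rightarrow> ('a \<Rightarrow> real) \<Rightarrow> real" where
  "qf W E z = ip W z (adj_mult W E z)"

lemma adj_lin: "adj_mult W E (\<lambda>w. f w + c * g w) v = adj_mult W E f v + c * adj_mult W E g v"
  unfolding adj_mult_def by (simp add: algebra_simps sum.distrib sum_distrib_left)

lemma adj_scale: "adj_mult W E (\<lambda>w. c * f w) v = c * adj_mult W E f v"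
  unfolding adj_mult_def by (simp add: algebra_simps sum_distrib_left)

lemma adj_cong: "(\<And>w. w \<in> W \<Longrightarrow> f w = g w) \<Longrightarrow> adj_mult W E f v = adj_mult W E g v"
  unfolding adj_mult_def by (auto intro!: sum.cong)

lemma ip_cong: "(\<And>w. w \<in> W \<Longrightarrow> f w = f' w) \<Longrightarrow> (\<And>w. w \<in> W \<Longrightarrow> g w = g' w) \<Longrightarrow> ip W f g = ip W f' g'"
  unfolding ip_def by (auto intro!: sum.cong)

lemma ip_comm: "ip W f g = ip W g f"
  unfolding ip_def by (simp add: mult.commute)

lemma adj_sym:
  assumes "\<forall>v\<in>W. \<forall>w\<in>W. E v w = E w v"
  shows "ip W (adj_mult W E f) g = ip W f (adj_mult W E g)"
proof -
  have "ip W (adj_mult W E f) g = (\<Sum>v\<in>W. \<Sum>w\<in>W. (if E v w then 1 else 0) * f w * g v)"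
    unfolding ip_def adj_mult_def by (simp add: sum_distrib_right)
  also have "\<dots> = (\<Sum>w\<in>W. \<Sum>v\<in>W. (if E v w then 1 else 0) * f w * g v)"
    by (rule sum.swap)
  also have "\<dots> = (\<Sum>w\<in>W. \<Sum>v\<in>W. (if E w v then 1 else 0) * f w * g v)"
    using assms by (intro sum.cong refl) auto
  also have "\<dots> = ip W f (adj_mult W E g)"
    unfolding ip_def adj_mult_def by (simp add: sum_distrib_left algebra_simps)
  finally show ?thesis .
qed

lemma qf_scale: "qf W E (\<lambda>w. c * f w) = c\<^sup>2 * qf W E f"
  unfolding qf_def ip_def adj_scale by (simp add: sum_distrib_left power2_eq_square algebra_simps)

lemma ip_scale: "ip W (\<lambda>w. c * f w) (\<lambda>w. c * f w) = c\<^sup>2 * ip W f f"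
  unfolding ip_def by (simp add: sum_distrib_left power2_eq_square algebra_simps)

lemma ip_lin: "ip W (\<lambda>w. f w + e * g w) (\<lambda>w. f w + e * g w) = ip W f f + 2 * e * ip W f g + e\<^sup>2 * ip W g g"
  unfolding ip_def by (simp add: sum.distrib sum_distrib_left power2_eq_square algebra_simps)

lemma qf_lin:
  assumes "\<forall>v\<in>W. \<forall>w\<in>W. E v w = E w v"
  shows "qf W E (\<lambda>w. f w + e * g w) = qf W E f + 2 * e * ip W (adj_mult W E f) g + e\<^sup>2 * qf W E g"
proof -
  have s: "ip W f (adj_mult W E g) = ip W (adj_mult W E f) g" using adj_sym[OF assms] by simp
  have "qf W E (\<lambda>w. f w + e * g w) = ip W f (adj_mult W E f) + e * ip W f (adj_mult W E g)
     + e * ip W g (adj_mult W E f) + e\<^sup>2 * qf W E g"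
    unfolding qf_def adj_lin unfolding ip_def
    by (simp add: sum.distrib sum_distrib_left power2_eq_square algebra_simps)
  then show ?thesis using s by (simp add: qf_def ip_comm[of W g])
qed

lemma ip_self_nonneg: "ip W f f \<ge> 0"
  unfolding ip_def by (auto intro: sum_nonneg)

lemma ip_self_zero: "finite W \<Longrightarrow> ip W f f = 0 \<Longrightarrow> w \<in> W \<Longrightarrow> f w = 0"
  unfolding ip_def using sum_nonneg_eq_0_iff[of W "\<lambda>w. f w * f w"] by auto

lemma cont_coord: "continuous_on S (\<lambda>z::'a \<Rightarrow> real. z i)"
  by (rule continuous_on_subset[OF continuous_on_product_coordinates]) simp

lemma qf_cont: "continuous_on S (\<lambda>z. qf W E z)"
  unfolding qf_def ip_def adj_mult_def
  by (intro continuous_intros cont_coord)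

lemma ip_cont: "continuous_on S (\<lambda>z. ip W z z)"
  unfolding ip_def
  by (intro continuous_intros cont_coord)

lemma rayleigh:
  assumes fin: "finite W" and ne: "W \<noteq> {}" and sym: "\<forall>v\<in>W. \<forall>w\<in>W. E v w = E w v"
  shows "\<exists>lam. is_eigenvalue W E lam \<and> (\<forall>y. qf W E y \<le> lam * ip W y y)"
proof -
  define S :: "('a \<Rightarrow> real) set" where "S = PiE UNIV (\<lambda>w. if w \<in> W then {-1..1} else {0})"
  have cS: "compact S"
    using compactin_PiE[of "\<lambda>i. euclidean" UNIV "\<lambda>w. if w \<in> W then {-1..1::real} else {0}"]
    unfolding S_def euclidean_product_topology by auto
  have cl: "closed {z::'a\<Rightarrow>real. ip W z z = 1}"
    by (rule closed_Collect_eq) (auto intro: ip_cont)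
  define K where "K = S \<inter> {z. ip W z z = 1}"
  have cK: "compact K" unfolding K_def using cS cl by auto
  obtain w0 where w0: "w0 \<in> W" using ne by auto
  have "(\<lambda>w. if w = w0 then 1 else 0) \<in> K"
    unfolding K_def S_def ip_def using w0 fin by (auto simp: if_distrib cong: if_cong)
  then have neK: "K \<noteq> {}" by auto
  obtain z0 where z0K: "z0 \<in> K" and zmax: "\<And>y. y \<in> K \<Longrightarrow> qf W E y \<le> qf W E z0"
    using continuous_attains_sup[OF cK neK qf_cont] by blast
  define lam where "lam = qf W E z0"
  have z01: "ip W z0 z0 = 1" using z0K unfolding K_def by auto
  have gen: "qf W E y \<le> lam * ip W y y" for y
  proof -
    define y' where "y' = (\<lambda>w. if w \<in> W then y w else 0)"
    have yy: "\<And>w. w \<in> W \<Longrightarrow> y w = y' w" by (simp add: y'_def)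
    have e1: "qf W E y = qf W E y'" unfolding qf_def by (intro ip_cong adj_cong yy)
    have e2: "ip W y y = ip W y' y'" by (intro ip_cong yy)
    show ?thesis
    proof (cases "ip W y' y' = 0")
      case True
      then have "\<And>w. w \<in> W \<Longrightarrow> y' w = 0" by (rule ip_self_zero[OF fin])
      then have "qf W E y' = 0" unfolding qf_def ip_def by simp
      then show ?thesis using e1 e2 True by simp
    next
      case False
      define N where "N = ip W y' y'"
      have Npos: "N > 0" using False ip_self_nonneg[of W y'] unfolding N_def by linarith
      define c where "c = 1 / sqrt N"
      have c2: "c\<^sup>2 * N = 1" using Npos unfolding c_def by (simp add: power_divide)
      define yc where "yc = (\<lambda>w. c * y' w)"
      have ipc0: "ip W yc yc = c\<^sup>2 * N" unfolding yc_def N_def by (rule ip_scale)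
      have ipc: "ip W yc yc = 1" using ipc0 c2 by simp
      have "yc \<in> S"
        unfolding S_def
      proof (rule PiE_I)
        fix w
        show "yc w \<in> (if w \<in> W then {-1..1} else {0})"
        proof (cases "w \<in> W")
          case True
          have "yc w * yc w \<le> (\<Sum>w\<in>W. yc w * yc w)"
            by (rule member_le_sum) (use True fin in auto)
          then have "(yc w)\<^sup>2 \<le> 1" using ipc unfolding ip_def power2_eq_square by simp
          then have "\<bar>yc w\<bar> \<le> 1" by (simp only: abs_square_le_1)
          then show ?thesis using True by auto
        next
          case False
          then show ?thesis by (simp add: yc_def y'_def)
        qed
      qed simp
      then have "yc \<in> K" unfolding K_def using ipc by simp
      then have "qf W E yc \<le> lam" using zmax unfolding lam_def by blast
      moreover have "qf W E yc = c\<^sup>2 * qf W E y'" unfolding yc_def by (rule qf_scale)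
      ultimately have h1: "c\<^sup>2 * qf W E y' \<le> c\<^sup>2 * (lam * N)" using c2
        by (metis mult.left_commute mult.right_neutral)
      have "c \<noteq> 0" using c2 by auto
      then have "c\<^sup>2 > 0" by simp
      then have "qf W E y' \<le> lam * N" using h1 mult_le_cancel_left_pos by blast
      then show ?thesis using e1 e2 N_def by simp
    qed
  qed
  define r where "r = (\<lambda>w. adj_mult W E z0 w - lam * z0 w)"
  define a where "a = ip W r r"
  define b where "b = qf W E r - lam * ip W r r"
  have ar: "ip W (adj_mult W E z0) r - lam * ip W z0 r = a"
    unfolding a_def r_def ip_def by (simp add: sum_distrib_left algebra_simps sum_subtractf sum.distrib)
  have quad: "2 * e * a + e\<^sup>2 * b \<le> 0" for e
  proof -
    have "qf W E (\<lambda>w. z0 w + e * r w) \<le> lam * ip W (\<lambda>w. z0 w + e * r w) (\<lambda>w. z0 w + e * r w)"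
      by (rule gen)
    then show ?thesis unfolding qf_lin[OF sym] ip_lin z01 lam_def[symmetric] b_def
      using ar by (simp add: algebra_simps)
  qed
  have a0: "a \<ge> 0" unfolding a_def by (rule ip_self_nonneg)
  have "a = 0"
  proof (rule ccontr)
    assume "a \<noteq> 0"
    then have apos: "a > 0" using a0 by auto
    define e where "e = a / (\<bar>b\<bar> + 1)"
    have epos: "e > 0" unfolding e_def using apos by auto
    have bp: "\<bar>b\<bar> + 1 > 0" by simp
    have "a * \<bar>b\<bar> < a * (\<bar>b\<bar> + 1)" using apos by simp
    then have "a * \<bar>b\<bar> / (\<bar>b\<bar> + 1) < a" using bp by (simp only: pos_divide_less_eq)
    moreover have "e * \<bar>b\<bar> = a * \<bar>b\<bar> / (\<bar>b\<bar> + 1)" unfolding e_def by simp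
    ultimately have eb: "e * \<bar>b\<bar> < a" by simp
    have "e * (- \<bar>b\<bar>) \<le> e * b" using epos by (intro mult_left_mono) auto
    then have "e * b > - a" using eb by simp
    then have "e * (2 * a + e * b) > 0" using epos apos by (intro mult_pos_pos) auto
    then show False using quad[of e] by (simp add: power2_eq_square algebra_simps)
  qed
  then have "\<And>w. w \<in> W \<Longrightarrow> r w = 0" unfolding a_def by (rule ip_self_zero[OF fin])
  then have eig: "\<forall>v\<in>W. adj_mult W E z0 v = lam * z0 v" unfolding r_def by auto
  have "\<exists>v\<in>W. z0 v \<noteq> 0"
  proof (rule ccontr)
    assume "\<not> ?thesis"
    then have "ip W z0 z0 = 0" unfolding ip_def by simp
    then show False using z01 by simp
  qed
  then have "is_eigenvalue W E lam" using eig unfolding is_eigenvalue_def is_eigenvector_def by blast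
  then show ?thesis using gen by blast
qed


lemma ip_diff: "ip W (\<lambda>y. d y - h y) (\<lambda>y. d y - h y) = ip W d d - 2 * ip W d h + ip W h h"
  unfolding ip_def by (simp add: sum_subtractf sum.distrib sum_distrib_left algebra_simps)

lemma bessel:
  assumes fin: "finite W" and finI: "finite I"
    and orth: "\<forall>i\<in>I. \<forall>j\<in>I. ip W (v i) (v j) = (if i = j then 1 else 0)"
    and w: "w \<in> W"
  shows "(\<Sum>i\<in>I. (v i w)\<^sup>2) \<le> 1"
proof -
  define d where "d = (\<lambda>y. if y = w then 1 else (0::real))"
  define h where "h = (\<lambda>y. \<Sum>i\<in>I. v i w * v i y)"
  have dd: "ip W d d = 1" unfolding ip_def d_def using fin w by (simp add: if_distrib cong: if_cong)
  have "ip W d h = (\<Sum>y\<in>W. if y = w then h y else 0)"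
    unfolding ip_def by (intro sum.cong) (auto simp: d_def)
  then have dh: "ip W d h = (\<Sum>i\<in>I. (v i w)\<^sup>2)" using fin w
    by (simp add: h_def power2_eq_square)
  have "ip W h h = (\<Sum>y\<in>W. \<Sum>i\<in>I. \<Sum>j\<in>I. (v i w * v j w) * (v i y * v j y))"
    unfolding ip_def h_def by (simp add: sum_product algebra_simps)
  also have "\<dots> = (\<Sum>i\<in>I. \<Sum>y\<in>W. \<Sum>j\<in>I. (v i w * v j w) * (v i y * v j y))"
    by (rule sum.swap)
  also have "\<dots> = (\<Sum>i\<in>I. \<Sum>j\<in>I. \<Sum>y\<in>W. (v i w * v j w) * (v i y * v j y))"
    by (intro sum.cong refl sum.swap)
  also have "\<dots> = (\<Sum>i\<in>I. \<Sum>j\<in>I. (v i w * v j w) * ip W (v i) (v j))"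
    unfolding ip_def by (simp add: sum_distrib_left)
  also have "\<dots> = (\<Sum>i\<in>I. \<Sum>j\<in>I. if i = j then v i w * v j w else 0)"
    using orth by (intro sum.cong refl) auto
  also have "\<dots> = (\<Sum>i\<in>I. (v i w)\<^sup>2)" using finI by (simp add: power2_eq_square)
  finally have hh: "ip W h h = (\<Sum>i\<in>I. (v i w)\<^sup>2)" .
  have "0 \<le> ip W (\<lambda>y. d y - h y) (\<lambda>y. d y - h y)" by (rule ip_self_nonneg)
  then show ?thesis unfolding ip_diff dd dh hh by simp
qed

lemma normalized_eig:
  assumes fin: "finite W" and "is_eigenvalue W E lam"
  shows "\<exists>v. (\<forall>w\<in>W. adj_mult W E v w = lam * v w) \<and> ip W v v = 1"
proof -
  obtain x where x: "\<exists>v\<in>W. x v \<noteq> 0" "\<forall>v\<in>W. adj_mult W E x v = lam * x v"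
    using assms(2) unfolding is_eigenvalue_def is_eigenvector_def by blast
  define N where "N = ip W x x"
  have "N \<noteq> 0"
  proof
    assume "N = 0"
    then have "\<And>w. w \<in> W \<Longrightarrow> x w = 0" unfolding N_def by (rule ip_self_zero[OF fin])
    then show False using x(1) by blast
  qed
  then have Npos: "N > 0" using ip_self_nonneg[of W x] N_def by linarith
  define c where "c = 1 / sqrt N"
  have c2: "c\<^sup>2 * N = 1" using Npos unfolding c_def by (simp add: power_divide)
  show ?thesis
    apply (rule exI[of _ "\<lambda>w. c * x w"])
    using x(2) c2 by (simp add: adj_scale ip_scale N_def[symmetric])
qed

lemma eig_finite:
  assumes fin: "finite W" and sym: "\<forall>v\<in>W. \<forall>w\<in>W. E v w = E w v"
  shows "finite {lam. is_eigenvalue W E lam}"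
proof (rule ccontr)
  assume inf: "\<not> ?thesis"
  obtain F where F: "finite F" "card F = Suc (card W)" "F \<subseteq> {lam. is_eigenvalue W E lam}"
    using infinite_arbitrarily_large[OF inf] by blast
  define v where "v = (\<lambda>lam. SOME v. (\<forall>w\<in>W. adj_mult W E v w = lam * v w) \<and> ip W v v = 1)"
  have vp: "(\<forall>w\<in>W. adj_mult W E (v lam) w = lam * v lam w) \<and> ip W (v lam) (v lam) = 1"
    if "lam \<in> F" for lam
  proof -
    have "is_eigenvalue W E lam" using F that by auto
    from someI_ex[OF normalized_eig[OF fin this]] show ?thesis unfolding v_def .
  qed
  have orth: "\<forall>i\<in>F. \<forall>j\<in>F. ip W (v i) (v j) = (if i = j then 1 else 0)"
  proof (intro ballI)
    fix i j assume ij: "i \<in> F" "j \<in> F"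
    show "ip W (v i) (v j) = (if i = j then 1 else 0)"
    proof (cases "i = j")
      case True then show ?thesis using vp ij by auto
    next
      case False
      have "ip W (adj_mult W E (v i)) (v j) = i * ip W (v i) (v j)"
        unfolding ip_def using vp[OF ij(1)] by (simp add: sum_distrib_left algebra_simps)
      moreover have "ip W (v i) (adj_mult W E (v j)) = j * ip W (v i) (v j)"
        unfolding ip_def using vp[OF ij(2)] by (simp add: sum_distrib_left algebra_simps)
      moreover have "ip W (adj_mult W E (v i)) (v j) = ip W (v i) (adj_mult W E (v j))"
        by (rule adj_sym[OF sym])
      ultimately have "i * ip W (v i) (v j) = j * ip W (v i) (v j)" by linarith
      then show ?thesis using False by simp
    qed
  qed
  have "real (card F) = (\<Sum>lam\<in>F. ip W (v lam) (v lam))" using vp by simp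
  also have "\<dots> = (\<Sum>w\<in>W. \<Sum>lam\<in>F. (v lam w)\<^sup>2)"
    unfolding ip_def by (subst sum.swap) (simp add: power2_eq_square)
  also have "\<dots> \<le> (\<Sum>w\<in>W. 1)" by (intro sum_mono bessel[OF fin F(1) orth])
  also have "\<dots> = real (card W)" by simp
  finally show False using F(2) by simp
qed


theorem lemma3:
  fixes V :: "'a set" and E :: "'a \<Rightarrow> 'a \<Rightarrow> bool" and x :: "'a \<Rightarrow> real" and u :: 'a
  assumes "simple_graph V E"
    and "min_degree V E \<ge> 1"
    and "\<forall>v\<in>V. x v \<ge> 0"
    and "(\<Sum>v\<in>V. (x v)\<^sup>2) = 1"
    and "is_eigenvector V E (spec_radius V E) x"
    and "u \<in> V" and "x u = Min (x ` V)"
  shows "spec_radius (V - {u}) E \<ge>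
    spec_radius V E * (1 - 1 / ((spec_radius V E)\<^sup>2 / real (min_degree V E)
       + real (card V) - real (min_degree V E) - 1))"
proof -
  note G = assms(1)[unfolded simple_graph_def]
  have fin: "finite V" and Vne: "V \<noteq> {}" and sym: "\<forall>v\<in>V. \<forall>w\<in>V. E v w = E w v"
    and irr: "\<forall>v\<in>V. \<not> E v v" using G by auto
  define mu where "mu = spec_radius V E"
  define d where "d = min_degree V E"
  define n where "n = card V"
  define t where "t = x u"
  define W where "W = V - {u}"
  have u: "u \<in> V" using assms(6) .
  have xnn: "\<And>v. v \<in> V \<Longrightarrow> x v \<ge> 0" using assms(3) by auto
  have eq: "\<And>v. v \<in> V \<Longrightarrow> adj_mult V E x v = mu * x v"
    using assms(5) unfolding is_eigenvector_def mu_def by auto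
  have unit: "(\<Sum>v\<in>V. (x v)\<^sup>2) = 1" using assms(4) .
  have d1: "d \<ge> 1" using assms(2) d_def by simp
  have tmin: "\<And>v. v \<in> V \<Longrightarrow> t \<le> x v" unfolding t_def assms(7) using fin by auto
  have t0: "t \<ge> 0" using xnn u t_def by auto
  have adjnn: "\<And>v. adj_mult V E x v \<ge> 0" unfolding adj_mult_def using xnn by (auto intro!: sum_nonneg)
  have "mu = mu * (\<Sum>v\<in>V. (x v)\<^sup>2)" using unit by simp
  also have "\<dots> = (\<Sum>v\<in>V. x v * (mu * x v))"
    by (simp add: sum_distrib_left power2_eq_square algebra_simps)
  also have "\<dots> = (\<Sum>v\<in>V. x v * adj_mult V E x v)" using eq by simp
  also have "\<dots> \<ge> 0" using xnn adjnn by (auto intro!: sum_nonneg)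
  finally have mu0: "mu \<ge> 0" .
  have degle: "\<And>v. v \<in> V \<Longrightarrow> Defs.degree V E v \<le> n - 1"
  proof -
    fix v assume v: "v \<in> V"
    have "{w \<in> V. E v w} \<subseteq> V - {v}" using irr v by auto
    then have "card {w \<in> V. E v w} \<le> card (V - {v})" using fin by (intro card_mono) auto
    then show "Defs.degree V E v \<le> n - 1" using v fin unfolding Defs.degree_def n_def by simp
  qed
  have dmin: "\<And>v. v \<in> V \<Longrightarrow> d \<le> Defs.degree V E v" unfolding d_def min_degree_def using fin by auto
  have "Min (Defs.degree V E ` V) \<in> Defs.degree V E ` V" using fin Vne by (intro Min_in) auto
  then obtain w0 where w0: "w0 \<in> V" "Defs.degree V E w0 = d"
    unfolding d_def min_degree_def by auto
  have dn: "d \<le> n - 1" using degle w0 by auto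
  have "Defs.degree V E u \<ge> 1" using dmin[OF u] d1 by simp
  then have "{w \<in> V. E u w} \<noteq> {}" unfolding Defs.degree_def by (metis card.empty not_one_le_zero)
  then obtain w1 where w1: "w1 \<in> V" "E u w1" by auto
  have w1u: "w1 \<noteq> u" using irr u w1 by auto
  have n2: "n \<ge> 2"
  proof -
    have "card {u, w1} \<le> n" unfolding n_def using fin u w1 by (intro card_mono) auto
    then show ?thesis using w1u by simp
  qed
  have "(\<Sum>v\<in>V. t\<^sup>2) \<le> (\<Sum>v\<in>V. (x v)\<^sup>2)"
    using tmin t0 by (intro sum_mono power_mono) auto
  then have tn: "real n * t\<^sup>2 \<le> 1" using unit n_def by simp
  have s1: "t\<^sup>2 < 1"
  proof -
    have "real n \<ge> 2" using n2 by simp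
    then have "2 * t\<^sup>2 \<le> real n * t\<^sup>2" by (intro mult_right_mono) auto
    then show ?thesis using tn by simp
  qed
  define N where "N = {v \<in> V. E w0 v}"
  have cN: "card N = d" using w0 unfolding N_def Defs.degree_def by simp
  have NV: "N \<subseteq> V" unfolding N_def by auto
  have finN: "finite N" using fin NV finite_subset by auto
  have "adj_mult V E x w0 = (\<Sum>v\<in>N. x v)"
    unfolding adj_mult_def N_def using fin by (subst sum.inter_filter) (auto intro: sum.cong)
  then have sN: "mu * x w0 = (\<Sum>v\<in>N. x v)" using eq w0 by simp
  have cs: "(\<Sum>v\<in>N. x v)\<^sup>2 \<le> (\<Sum>v\<in>N. (x v)\<^sup>2) * real d"
    using sum_squared_le_sum_of_squares[of x N] cN by simp
  have "t\<^sup>2 \<le> (x w0)\<^sup>2" using tmin[OF w0(1)] t0 by (intro power_mono) auto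
  then have "mu\<^sup>2 * t\<^sup>2 \<le> mu\<^sup>2 * (x w0)\<^sup>2" by (intro mult_left_mono) auto
  also have "\<dots> = (\<Sum>v\<in>N. x v)\<^sup>2" using sN by (metis power_mult_distrib)
  finally have k1: "mu\<^sup>2 * t\<^sup>2 \<le> (\<Sum>v\<in>N. (x v)\<^sup>2) * real d" using cs by linarith
  have "(\<Sum>v\<in>V - N. t\<^sup>2) \<le> (\<Sum>v\<in>V - N. (x v)\<^sup>2)"
    using tmin t0 by (intro sum_mono power_mono) auto
  moreover have "card (V - N) = n - d" using card_Diff_subset[OF finN NV] cN n_def by simp
  ultimately have k2: "real (n - d) * t\<^sup>2 \<le> (\<Sum>v\<in>V - N. (x v)\<^sup>2)" by simp
  have split: "(\<Sum>v\<in>V. (x v)\<^sup>2) = (\<Sum>v\<in>N. (x v)\<^sup>2) + (\<Sum>v\<in>V - N. (x v)\<^sup>2)"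
    using sum.subset_diff[OF NV fin, of "\<lambda>v. (x v)\<^sup>2"] by simp
  have rnd: "real (n - d) = real n - real d" using dn n2 by simp
  have dpos: "real d > 0" using d1 by simp
  have "mu\<^sup>2 * t\<^sup>2 / real d \<le> (\<Sum>v\<in>N. (x v)\<^sup>2)" using k1 dpos by (simp add: divide_le_eq)
  then have key: "t\<^sup>2 * (mu\<^sup>2 / real d + real n - real d) \<le> 1"
    using k2 split unit rnd by (simp add: algebra_simps)
  have finW: "finite W" using fin W_def by simp
  have Wne: "W \<noteq> {}" using w1 w1u W_def by auto
  have symW: "\<forall>v\<in>W. \<forall>w\<in>W. E v w = E w v" using sym W_def by auto
  obtain lam where lam: "is_eigenvalue W E lam" "\<forall>y. qf W E y \<le> lam * ip W y y"
    using rayleigh[OF finW Wne symW] by blast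
  have ipW: "ip W x x = 1 - t\<^sup>2"
    unfolding ip_def W_def t_def using sum.remove[OF fin u, of "\<lambda>v. (x v)\<^sup>2"] unit
    by (simp add: power2_eq_square)
  have adjW: "adj_mult W E x v = mu * x v - (if E v u then 1 else 0) * t" if v: "v \<in> W" for v
  proof -
    have "adj_mult V E x v = (if E v u then 1 else 0) * t + adj_mult W E x v"
      unfolding adj_mult_def W_def t_def using sum.remove[OF fin u, of "\<lambda>w. (if E v w then 1 else 0) * x w"] by simp
    then show ?thesis using eq[of v] v W_def by simp
  qed
  have "(\<Sum>v\<in>W. (if E v u then 1 else 0) * x v) = (\<Sum>v\<in>V. (if E u v then 1 else 0) * x v)"
  proof -
    have "(\<Sum>v\<in>V. (if E u v then 1 else 0) * x v) = (if E u u then 1 else 0) * x u + (\<Sum>v\<in>W. (if E u v then 1 else 0) * x v)"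
      unfolding W_def using sum.remove[OF fin u, of "\<lambda>v. (if E u v then 1 else 0) * x v"] by simp
    also have "\<dots> = (\<Sum>v\<in>W. (if E v u then 1 else 0) * x v)"
      using irr u sym W_def by (auto intro!: sum.cong)
    finally show ?thesis by simp
  qed
  also have "\<dots> = mu * t" using eq[OF u] unfolding adj_mult_def t_def by simp
  finally have sW: "(\<Sum>v\<in>W. (if E v u then 1 else 0) * x v) = mu * t" .
  have "qf W E x = (\<Sum>v\<in>W. x v * (mu * x v - (if E v u then 1 else 0) * t))"
    unfolding qf_def ip_def using adjW by (intro sum.cong) auto
  also have "\<dots> = mu * ip W x x - t * (\<Sum>v\<in>W. (if E v u then 1 else 0) * x v)"
    unfolding ip_def by (simp add: sum_subtractf sum_distrib_left algebra_simps)
  finally have qW: "qf W E x = mu * (1 - 2 * t\<^sup>2)" using ipW sW by (simp add: algebra_simps power2_eq_square)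
  have "finite {lam. is_eigenvalue W E lam}" by (rule eig_finite[OF finW symW])
  then have "spec_radius W E \<ge> lam" unfolding spec_radius_def using lam(1) by (intro Max_ge) auto
  moreover have "mu * (1 - 2 * t\<^sup>2) \<le> lam * (1 - t\<^sup>2)" using lam(2) qW ipW by metis
  ultimately have R: "mu * (1 - 2 * t\<^sup>2) \<le> spec_radius W E * (1 - t\<^sup>2)"
    using s1 by (smt (verit) mult_right_mono)
  define D where "D = mu\<^sup>2 / real d + real n - real d - 1"
  have goal: "spec_radius W E \<ge> mu * (1 - 1 / D)"
  proof (cases "t = 0")
    case True
    have "real d + 1 \<le> real n" using dn n2 by linarith
    moreover have "mu\<^sup>2 / real d \<ge> 0" using dpos by simp
    ultimately have "D \<ge> 0" unfolding D_def by linarith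
    then have "mu / D \<ge> 0" using mu0 by simp
    then show ?thesis using R True by (simp add: algebra_simps)
  next
    case False
    then have tpos: "t > 0" using t0 by simp
    define Nu where "Nu = {v \<in> V. E u v}"
    have "adj_mult V E x u = (\<Sum>v\<in>Nu. x v)"
      unfolding adj_mult_def Nu_def using fin by (subst sum.inter_filter) (auto intro: sum.cong)
    moreover have "(\<Sum>v\<in>Nu. t) \<le> (\<Sum>v\<in>Nu. x v)" using tmin unfolding Nu_def by (intro sum_mono) auto
    moreover have "card Nu \<ge> d" using dmin[OF u] unfolding Nu_def Defs.degree_def by simp
    then have "real d * t \<le> real (card Nu) * t" using t0 by (intro mult_right_mono) auto
    moreover have "(\<Sum>v\<in>Nu. t) = real (card Nu) * t" by simp
    ultimately have "real d * t \<le> mu * t" using eq[OF u, folded t_def] by linarith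
    then have mud: "mu \<ge> real d" using tpos by simp
    have "mu\<^sup>2 \<ge> real d * real d" using mud dpos by (simp add: power2_eq_square mult_mono)
    then have "mu\<^sup>2 / real d \<ge> real d" using dpos by (simp add: le_divide_eq)
    then have Dge: "D \<ge> real n - 1" unfolding D_def by simp
    then have Dpos: "D > 0" using n2 by simp
    define s where "s = t\<^sup>2"
    have keyD: "s * (D + 1) \<le> 1" using key unfolding s_def D_def by simp
    have s1': "1 - s > 0" using s1 s_def by simp
    have "(1 - 1 / D) * (1 - s) - (1 - 2 * s) = (s * (D + 1) - 1) / D"
      using Dpos by (simp add: field_simps)
    also have "\<dots> \<le> 0" using keyD Dpos by (simp add: divide_nonpos_pos)
    finally have "(1 - 1 / D) * (1 - s) \<le> 1 - 2 * s" by simp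
    then have "mu * ((1 - 1 / D) * (1 - s)) \<le> mu * (1 - 2 * s)" using mu0 by (rule mult_left_mono)
    then have "mu * (1 - 1 / D) * (1 - s) \<le> spec_radius W E * (1 - s)"
      using R s_def by (simp add: mult.assoc)
    then show ?thesis using s1' by simp
  qed
  then show ?thesis unfolding D_def mu_def d_def n_def W_def by simp
qed

end
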